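(* For all real numbers $a,b,c>0$, \[ \frac{(a+b+c)^3}{(ab+bc+ca)^2}\leq \frac{4a}{(b+c)^2}+\frac{4b}{(c+a)^2}+\frac{4c}{(a+b)^2}. \] *)

theory Defs
  imports Complex_Main
begin

end

theory Submission
  imports Defs
begin

lemma tang:
  fixes x y k :: real
  assumes "x \<ge> 0" "y > 0" "k \<ge> 0"
  shows "x ^ 3 / y ^ 2 \<ge> 3 * x * k ^ 2 - 2 * y * k ^ 3"
proof -
  have "x ^ 3 - (3 * x * k ^ 2 - 2 * y * k ^ 3) * y ^ 2 = (x - k*y)^2 * (x + 2*k*y)"
    by (simp add: algebra_simps power2_eq_square power3_eq_cube)
  moreover have "(x - k*y)^2 * (x + 2*k*y) \<ge> 0" using assms by simp
  ultimately have "(3 * x * k ^ 2 - 2 * y * k ^ 3) * y ^ 2 \<le> x ^ 3" by linarith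
  thus ?thesis using assms by (simp add: pos_le_divide_eq)
qed

theorem mainTheorem1:
  fixes a b c :: real
  assumes "a > 0" and "b > 0" and "c > 0"
  shows "(a + b + c) ^ 3 / (a * b + b * c + c * a) ^ 2
           \<le> 4 * a / (b + c) ^ 2 + 4 * b / (c + a) ^ 2 + 4 * c / (a + b) ^ 2"
proof -
  define X where "X = a + b + c"
  define Y where "Y = a*(b+c) + b*(c+a) + c*(a+b)"
  define k where "k = X / Y"
  have Yp: "Y > 0" using assms unfolding Y_def by (simp add: add_pos_pos)
  have kp: "k \<ge> 0" using assms Yp unfolding k_def X_def by simp
  have e1: "a ^ 3 / (a*(b+c)) ^ 2 = a / (b+c)^2"
  proof -
    have "a ^ 3 / (a*(b+c)) ^ 2 = (a*a) * a / ((a*a) * (b+c)^2)"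
      by (simp add: power2_eq_square power3_eq_cube algebra_simps)
    also have "\<dots> = a / (b+c)^2" using assms by (simp only: mult_divide_mult_cancel_left_if) simp
    finally show ?thesis .
  qed
  have e2: "b ^ 3 / (b*(c+a)) ^ 2 = b / (c+a)^2"
  proof -
    have "b ^ 3 / (b*(c+a)) ^ 2 = (b*b) * b / ((b*b) * (c+a)^2)"
      by (simp add: power2_eq_square power3_eq_cube algebra_simps)
    also have "\<dots> = b / (c+a)^2" using assms by (simp only: mult_divide_mult_cancel_left_if) simp
    finally show ?thesis .
  qed
  have e3: "c ^ 3 / (c*(a+b)) ^ 2 = c / (a+b)^2"
  proof -
    have "c ^ 3 / (c*(a+b)) ^ 2 = (c*c) * c / ((c*c) * (a+b)^2)"
      by (simp add: power2_eq_square power3_eq_cube algebra_simps)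
    also have "\<dots> = c / (a+b)^2" using assms by (simp only: mult_divide_mult_cancel_left_if) simp
    finally show ?thesis .
  qed
  have t1: "a / (b+c)^2 \<ge> 3 * a * k ^ 2 - 2 * (a*(b+c)) * k ^ 3"
    using tang[of a "a*(b+c)" k] assms kp e1 by simp
  have t2: "b / (c+a)^2 \<ge> 3 * b * k ^ 2 - 2 * (b*(c+a)) * k ^ 3"
    using tang[of b "b*(c+a)" k] assms kp e2 by simp
  have t3: "c / (a+b)^2 \<ge> 3 * c * k ^ 2 - 2 * (c*(a+b)) * k ^ 3"
    using tang[of c "c*(a+b)" k] assms kp e3 by simp
  have sum: "a / (b+c)^2 + b / (c+a)^2 + c / (a+b)^2 \<ge> 3 * X * k^2 - 2 * Y * k^3"
    using t1 t2 t3 unfolding X_def Y_def by (simp add: algebra_simps)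
  have "3 * X * k^2 - 2 * Y * k^3 = X^3 / Y^2"
    using Yp unfolding k_def by (simp add: power2_eq_square power3_eq_cube field_simps)
  moreover have Yeq: "Y = 2 * (a * b + b * c + c * a)" unfolding Y_def by algebra
  moreover have "Y^2 = 4 * (a * b + b * c + c * a)^2" unfolding Yeq by algebra
  ultimately have "a / (b+c)^2 + b / (c+a)^2 + c / (a+b)^2 \<ge> X^3 / (4 * (a * b + b * c + c * a)^2)"
    using sum by metis
  hence "4 * (a / (b+c)^2 + b / (c+a)^2 + c / (a+b)^2) \<ge> X^3 / (a * b + b * c + c * a)^2"
  proof -
    assume h: ?this
    have "X^3 / (a * b + b * c + c * a)^2 = 4 * (X^3 / (4 * (a * b + b * c + c * a)^2))" by simp
    thus ?thesis using mult_left_mono[OF h, of 4] by simp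
  qed
  thus ?thesis unfolding X_def by simp
qed

end
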